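(* Let $P$ be a finite poset and $h$ any height function on $P$. Then the coefficients of $\mathsf{Z}_{P,h}(x)$ have no pole at $q=1$, and setting $q=1$ in them gives the classical Zeta polynomial $Z_P(x)$ of $P$, i.e. the unique polynomial with $Z_P(n)=\#\{(e_1,\dots,e_{n-1})\in P^{n-1}: e_1\le\cdots\le e_{n-1}\}$ for all integers $n\ge2$.
   Context: $q$ is an indeterminate; $[n]_q=(q^n-1)/(q-1)$. A height function is $h:P\to\mathbb{N}$ with $h(x)<h(y)$ whenever $y$ covers $x$. For a tuple $a$ of $k$ distinct nonnegative integers, $\mathsf{E}_a\in\mathbb{Q}(q)[x]$ is the unique polynomial with $\mathsf{E}_a([n]_q)=\sum_{m\in\mathbb{N}^k,\sum m_i=n}q^{\sum a_im_i}$ for $n\ge0$ (its specialization at $q=1$ is $\binom{x+k-1}{k-1}$). The $q$-Zeta polynomial is $\mathsf{Z}_{P,h}(x)=\sum_{k\ge1}\sum_{c_1<\cdots<c_k\text{ in }P}q^{\sum_i h(c_i)}\mathsf{E}_{(h(c_1),\dots,h(c_k))}((x-[k+1]_q)/q^{k+1})\in\mathbb{Q}(q)[x]$; it is the unique polynomial with $\mathsf{Z}_{P,h}([n]_q)=\sum_{e_1\le\cdots\le e_{n-1}}q^{\sum_j h(e_j)}$ for all $n\ge2$. *)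

theory Defs
  imports "HOL-Computational_Algebra.Polynomial" "HOL-Computational_Algebra.Fraction_Field"
begin

type_synonym ratfun = "rat poly fract"

definition qvar :: ratfun where
  "qvar = Fract [:0, 1:] 1"

definition qint :: "nat \<Rightarrow> ratfun" where
  "qint n = (qvar ^ n - 1) / (qvar - 1)"

definition Esum :: "nat list \<Rightarrow> nat \<Rightarrow> ratfun" where
  "Esum a n = (\<Sum>m \<in> {m :: nat list. length m = length a \<and> sum_list m = n}.
                  qvar ^ (\<Sum>i<length a. a ! i * m ! i))"

definition Epoly :: "nat list \<Rightarrow> ratfun poly" where
  "Epoly a = (THE p. \<forall>n. poly p (qint n) = Esum a n)"

text \<open>Covering relation and height functions on a poset P (a subset of an ordered type,
  with the induced order).\<close>
definition covers :: "'a::order set \<Rightarrow> 'a \<Rightarrow> 'a \<Rightarrow> bool" where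
  "covers P x y \<longleftrightarrow> x \<in> P \<and> y \<in> P \<and> x < y \<and> \<not> (\<exists>z\<in>P. x < z \<and> z < y)"

definition height_function :: "'a::order set \<Rightarrow> ('a \<Rightarrow> nat) \<Rightarrow> bool" where
  "height_function P h \<longleftrightarrow> (\<forall>x y. covers P x y \<longrightarrow> h x < h y)"

definition strict_chains :: "'a::order set \<Rightarrow> 'a list set" where
  "strict_chains P = {cs. cs \<noteq> [] \<and> set cs \<subseteq> P \<and> sorted_wrt (<) cs}"

definition qZeta :: "'a::order set \<Rightarrow> ('a \<Rightarrow> nat) \<Rightarrow> ratfun poly" where
  "qZeta P h = (\<Sum>cs \<in> strict_chains P.
      smult (qvar ^ sum_list (map h cs))
        (pcompose (Epoly (map h cs))
           [: - qint (length cs + 1) / qvar ^ (length cs + 1), 1 / qvar ^ (length cs + 1) :]))"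

definition no_pole_at_1 :: "ratfun \<Rightarrow> bool" where
  "no_pole_at_1 r \<longleftrightarrow> (\<exists>a b. poly b 1 \<noteq> 0 \<and> r = Fract a b)"

definition eval_at_1 :: "ratfun \<Rightarrow> rat" where
  "eval_at_1 r = (THE v. \<exists>a b. poly b 1 \<noteq> 0 \<and> r = Fract a b \<and> v = poly a 1 / poly b 1)"

definition multichains :: "'a::order set \<Rightarrow> nat \<Rightarrow> 'a list set" where
  "multichains P l = {es. length es = l \<and> set es \<subseteq> P \<and> sorted_wrt (\<le>) es}"

definition Zeta :: "'a::order set \<Rightarrow> rat poly" where
  "Zeta P = (THE p. \<forall>n::nat. n \<ge> 2 \<longrightarrow> poly p (of_nat n) = of_nat (card (multichains P (n - 1))))"

end

theory Submission
  imports Defs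
begin

definition RR :: "ratfun set" where "RR = {r. no_pole_at_1 r}"
abbreviation ev :: "ratfun \<Rightarrow> rat" where "ev \<equiv> eval_at_1"

lemma ev_Fract: assumes "poly b 1 \<noteq> 0" shows "ev (Fract a b) = poly a 1 / poly b 1"
  unfolding eval_at_1_def
proof (rule the_equality)
  show "\<exists>a' b'. poly b' 1 \<noteq> 0 \<and> Fract a b = Fract a' b' \<and> poly a 1 / poly b 1 = poly a' 1 / poly b' 1"
    using assms by blast
next
  fix v assume "\<exists>a' b'. poly b' 1 \<noteq> 0 \<and> Fract a b = Fract a' b' \<and> v = poly a' 1 / poly b' 1"
  then obtain a' b' where h: "poly b' 1 \<noteq> 0" "Fract a b = Fract a' b'" "v = poly a' 1 / poly b' 1" by blast
  have "b \<noteq> 0" "b' \<noteq> 0" using assms h(1) by auto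
  then have "a * b' = a' * b" using h(2) eq_fract(1) by blast
  then have e: "poly a 1 * poly b' 1 = poly a' 1 * poly b 1" by (metis poly_mult)
  have "v * poly b' 1 = poly a' 1" using h by simp
  then have "v * poly b 1 * poly b' 1 = poly a 1 * poly b' 1" using e by (metis mult.commute mult.left_commute)
  then have "v * poly b 1 = poly a 1" using h(1) by simp
  then show "v = poly a 1 / poly b 1" using assms by (simp add: field_simps)
qed

lemma RR_Fract: "poly b 1 \<noteq> 0 \<Longrightarrow> Fract a b \<in> RR"
  unfolding RR_def no_pole_at_1_def by blast

lemma RR_E: assumes "r \<in> RR" obtains a b where "poly b 1 \<noteq> 0" "r = Fract a b"
  using assms unfolding RR_def no_pole_at_1_def by blast

lemma RR_add: assumes "r \<in> RR" "s \<in> RR" shows "r + s \<in> RR" "ev (r + s) = ev r + ev s"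
proof -
  obtain a b where ab: "poly b 1 \<noteq> 0" "r = Fract a b" using assms(1) by (rule RR_E)
  obtain c d where cd: "poly d 1 \<noteq> 0" "s = Fract c d" using assms(2) by (rule RR_E)
  have nz: "b \<noteq> 0" "d \<noteq> 0" using ab cd by auto
  have e: "r + s = Fract (a * d + c * b) (b * d)" using ab cd nz by simp
  show "r + s \<in> RR" unfolding e by (rule RR_Fract) (use ab cd in simp)
  show "ev (r + s) = ev r + ev s" unfolding e ab(2) cd(2)
    using ab(1) cd(1) nz by (simp add: ev_Fract field_simps)
qed

lemma RR_mult: assumes "r \<in> RR" "s \<in> RR" shows "r * s \<in> RR" "ev (r * s) = ev r * ev s"
proof -
  obtain a b where ab: "poly b 1 \<noteq> 0" "r = Fract a b" using assms(1) by (rule RR_E)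
  obtain c d where cd: "poly d 1 \<noteq> 0" "s = Fract c d" using assms(2) by (rule RR_E)
  have e: "r * s = Fract (a * c) (b * d)" using ab cd by simp
  show "r * s \<in> RR" unfolding e by (rule RR_Fract) (use ab cd in simp)
  show "ev (r * s) = ev r * ev s" unfolding e ab(2) cd(2)
    using ab(1) cd(1) by (simp add: ev_Fract field_simps)
qed

lemma RR_uminus: assumes "r \<in> RR" shows "- r \<in> RR" "ev (- r) = - ev r"
proof -
  obtain a b where ab: "poly b 1 \<noteq> 0" "r = Fract a b" using assms(1) by (rule RR_E)
  show "- r \<in> RR" using ab by (simp add: RR_Fract)
  show "ev (- r) = - ev r" using ab by (simp add: ev_Fract)
qed

lemma RR_diff: assumes "r \<in> RR" "s \<in> RR" shows "r - s \<in> RR" "ev (r - s) = ev r - ev s"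
  using RR_add[OF assms(1) RR_uminus(1)[OF assms(2)]] RR_uminus[OF assms(2)] by simp_all

lemma RR_inverse: assumes "r \<in> RR" "ev r \<noteq> 0" shows "inverse r \<in> RR" "ev (inverse r) = inverse (ev r)"
proof -
  obtain a b where ab: "poly b 1 \<noteq> 0" "r = Fract a b" using assms(1) by (rule RR_E)
  have a1: "poly a 1 \<noteq> 0" using assms(2) ab by (simp add: ev_Fract)
  show "inverse r \<in> RR" using ab a1 by (simp add: RR_Fract)
  show "ev (inverse r) = inverse (ev r)" using ab a1 by (simp add: ev_Fract)
qed

lemma RR_divide: assumes "r \<in> RR" "s \<in> RR" "ev s \<noteq> 0" shows "r / s \<in> RR" "ev (r / s) = ev r / ev s"
  using RR_mult[OF assms(1) RR_inverse(1)[OF assms(2,3)]] RR_inverse[OF assms(2,3)]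
  by (simp_all add: divide_inverse)

lemma RR_poly: "Fract p 1 \<in> RR" "ev (Fract p 1) = poly p 1"
  by (simp_all add: RR_Fract ev_Fract)

lemma RR_0: "0 \<in> RR" "ev 0 = 0" using RR_poly[of 0] by (simp_all add: Zero_fract_def)
lemma RR_1: "1 \<in> RR" "ev 1 = 1" using RR_poly[of 1] by (simp_all add: One_fract_def)

lemma RR_sum: assumes "\<And>x. x \<in> A \<Longrightarrow> f x \<in> RR"
  shows "sum f A \<in> RR \<and> ev (sum f A) = (\<Sum>x\<in>A. ev (f x))"
  using assms
proof (induction A rule: infinite_finite_induct)
  case (infinite A) then show ?case using RR_0 by simp
next
  case empty then show ?case using RR_0 by simp
next
  case (insert x F) then show ?case using RR_add by simp
qed

lemma RR_prod: assumes "\<And>x. x \<in> A \<Longrightarrow> f x \<in> RR"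
  shows "prod f A \<in> RR \<and> ev (prod f A) = (\<Prod>x\<in>A. ev (f x))"
  using assms
proof (induction A rule: infinite_finite_induct)
  case (infinite A) then show ?case using RR_1 by simp
next
  case empty then show ?case using RR_1 by simp
next
  case (insert x F) then show ?case using RR_mult by simp
qed

lemma RR_power: assumes "r \<in> RR" shows "r ^ n \<in> RR \<and> ev (r ^ n) = ev r ^ n"
  using RR_prod[of "{..<n}" "\<lambda>_. r"] assms by simp

lemma qvar_RR: "qvar \<in> RR" "ev qvar = 1"
  unfolding qvar_def using RR_poly[of "[:0,1:]"] by simp_all

lemma qvar_ne1: "qvar \<noteq> 1" unfolding qvar_def One_fract_def
  by (auto simp add: eq_fract dest: arg_cong[where f="\<lambda>p. coeff p 0"])
lemma qvar_ne0: "qvar \<noteq> 0" unfolding qvar_def Zero_fract_def by (simp add: eq_fract)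

lemma qpow_RR: "qvar ^ n \<in> RR" "ev (qvar ^ n) = 1"
  using RR_power[OF qvar_RR(1), of n] qvar_RR(2) by simp_all

lemma qint_sum: "qint n = (\<Sum>i<n. qvar ^ i)"
proof (induction n)
  case 0 then show ?case by (simp add: qint_def)
next
  case (Suc n)
  have "qvar - 1 \<noteq> 0" using qvar_ne1 by simp
  then have "qint (Suc n) = qint n + qvar ^ n" unfolding qint_def by (simp add: field_simps)
  then show ?case using Suc by simp
qed

lemma qint_RR: "qint n \<in> RR" "ev (qint n) = of_nat n"
  using RR_sum[of "{..<n}" "\<lambda>i. qvar ^ i"] qpow_RR unfolding qint_sum by simp_all

lemma qint_inj: "inj qint"
  by (rule injI) (metis qint_RR(2) of_nat_eq_iff)

lemma qint_add: "qint (j + m) = qint j + qvar ^ j * qint m"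
proof -
  have "qvar - 1 \<noteq> 0" using qvar_ne1 by simp
  have "qvar^j*qvar^m - 1 = (qvar^j - 1) + qvar^j*(qvar^m - 1)" by algebra
  then show ?thesis unfolding qint_def power_add
    by (metis (no_types, lifting) add_divide_distrib times_divide_eq_right)
qed

lemma qint_Suc: "qint (Suc n) = 1 + qvar * qint n"
  using qint_add[of 1 n] qvar_ne1 by (simp add: qint_def)

lemma qpow_qint: "1 + (qvar - 1) * qint n = qvar ^ n"
proof -
  have "qvar - 1 \<noteq> 0" using qvar_ne1 by simp
  then show ?thesis unfolding qint_def by (simp add: field_simps)
qed

lemma qpow_Fract: "qvar ^ n = Fract ([:0,1:] ^ n) 1"
  by (induction n) (simp_all add: qvar_def One_fract_def)

lemma qpow_inj: "qvar ^ b = qvar ^ c \<Longrightarrow> b = c"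
  unfolding qpow_Fract by (simp add: eq_fract) (metis degree_linear_power[of 0] pCons_0_0)

definition PR :: "ratfun poly \<Rightarrow> bool" where "PR p \<longleftrightarrow> (\<forall>i. coeff p i \<in> RR)"

lemma PR_pCons: "PR (pCons a p) \<longleftrightarrow> a \<in> RR \<and> PR p"
  unfolding PR_def by (auto simp: coeff_pCons split: nat.splits)

lemma PR_0: "PR 0" unfolding PR_def using RR_0 by simp
lemma PR_const: "c \<in> RR \<Longrightarrow> PR [:c:]" by (simp add: PR_pCons PR_0)

lemma PR_add: "PR p \<Longrightarrow> PR q \<Longrightarrow> PR (p + q)" unfolding PR_def using RR_add by simp
lemma PR_uminus: "PR p \<Longrightarrow> PR (- p)" unfolding PR_def using RR_uminus by simp
lemma PR_diff: "PR p \<Longrightarrow> PR q \<Longrightarrow> PR (p - q)" unfolding PR_def using RR_diff by simp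
lemma PR_smult: "c \<in> RR \<Longrightarrow> PR p \<Longrightarrow> PR (smult c p)" unfolding PR_def using RR_mult by simp
lemma PR_mult: "PR p \<Longrightarrow> PR q \<Longrightarrow> PR (p * q)"
  unfolding PR_def coeff_mult by (auto intro!: RR_sum[THEN conjunct1] RR_mult(1))

lemma PR_sum: "(\<And>x. x \<in> A \<Longrightarrow> PR (f x)) \<Longrightarrow> PR (sum f A)"
  by (induction A rule: infinite_finite_induct) (auto simp: PR_0 PR_add)

lemma PR_1: "PR 1" using PR_const[OF RR_1(1)] by (simp add: one_pCons)

lemma PR_prod: "(\<And>x. x \<in> A \<Longrightarrow> PR (f x)) \<Longrightarrow> PR (prod f A)"
  by (induction A rule: infinite_finite_induct) (auto simp: PR_1 PR_mult)

lemma PR_power: "PR p \<Longrightarrow> PR (p ^ n)"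
  using PR_prod[of "{..<n}" "\<lambda>_. p"] by simp

lemma PR_pcompose: assumes "PR p" "PR q" shows "PR (pcompose p q)"
  using assms(1)
proof (induction p rule: pCons_induct)
  case 0 then show ?case by (simp add: PR_0)
next
  case (pCons a p)
  then have "a \<in> RR" "PR (pcompose p q)" by (auto simp: PR_pCons)
  then show ?case by (simp add: pcompose_pCons PR_add PR_mult PR_const assms(2))
qed

lemma PR_poly: assumes "PR p" "x \<in> RR"
  shows "poly p x \<in> RR \<and> ev (poly p x) = poly (map_poly ev p) (ev x)"
  using assms(1)
proof (induction p rule: pCons_induct)
  case 0 then show ?case using RR_0 by simp
next
  case (pCons a p)
  then have a: "a \<in> RR" and p: "PR p" by (auto simp: PR_pCons)
  from pCons.IH[OF p] have ih: "poly p x \<in> RR" "ev (poly p x) = poly (map_poly ev p) (ev x)" by auto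
  have "map_poly ev (pCons a p) = pCons (ev a) (map_poly ev p)" by (rule map_poly_pCons) (rule RR_0(2))
  then show ?case using ih a assms(2) RR_add RR_mult by simp
qed

lemma interp_PR:
  fixes p :: "ratfun poly"
  assumes deg: "degree p \<le> d" and vals: "\<And>i. i \<le> d \<Longrightarrow> poly p (qint i) \<in> RR"
  shows "PR p"
proof -
  define fac where "fac i j = smult (inverse (qint i - qint j)) [:- qint j, 1:]" for i j
  define Lg where "Lg i = (\<Prod>j\<in>{..d}-{i}. fac i j)" for i
  define L where "L = (\<Sum>i\<le>d. smult (poly p (qint i)) (Lg i))"
  have facR: "PR (fac i j)" if "i \<noteq> j" for i j
  proof -
    have e: "ev (qint i - qint j) \<noteq> 0" using that RR_diff[OF qint_RR(1) qint_RR(1)] qint_RR(2) by simp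
    have iR: "inverse (qint i - qint j) \<in> RR" using RR_inverse(1)[OF RR_diff(1)[OF qint_RR(1) qint_RR(1)] e] .
    show ?thesis unfolding fac_def
      by (rule PR_smult[OF iR]) (simp add: PR_pCons PR_0 RR_uminus qint_RR RR_1)
  qed
  have LR: "PR L" unfolding L_def Lg_def
    by (intro PR_sum PR_smult PR_prod vals facR) auto
  have degfac: "degree (fac i j) \<le> 1" for i j unfolding fac_def
    by (rule order.trans[OF degree_smult_le]) simp
  have degLg: "degree (Lg i) \<le> d" if "i \<le> d" for i
  proof -
    have "degree (Lg i) \<le> (\<Sum>j\<in>{..d}-{i}. degree (fac i j))" unfolding Lg_def
      using degree_prod_sum_le[of "{..d}-{i}" "fac i"] by (simp add: o_def)
    also have "\<dots> \<le> (\<Sum>j\<in>{..d}-{i}. 1)" by (intro sum_mono degfac)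
    also have "\<dots> = d" using that by simp
    finally show ?thesis .
  qed
  have degL: "degree L \<le> d" unfolding L_def
    by (intro degree_sum_le) (auto intro: order.trans[OF degree_smult_le] degLg)
  have qne: "qint i - qint j \<noteq> 0" if "i \<noteq> j" for i j using qint_inj that by (auto dest: injD)
  have polyLg: "poly (Lg i) (qint k) = (if i = k then 1 else 0)" if "i \<le> d" "k \<le> d" for i k
  proof (cases "i = k")
    case True
    have f1: "poly (fac i j) (qint i) = 1" if "j \<noteq> i" for j
    proof -
      have "poly (fac i j) (qint i) = inverse (qint i - qint j) * (qint i - qint j)"
        by (simp add: fac_def algebra_simps)
      then show ?thesis using qne[of i j] that by simp
    qed
    have "poly (Lg i) (qint k) = (\<Prod>j\<in>{..d}-{i}. 1)" unfolding Lg_def poly_prod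
      by (intro prod.cong refl) (use True f1 in auto)
    then show ?thesis using True by simp
  next
    case False
    have "poly (Lg i) (qint k) = (\<Prod>j\<in>{..d}-{i}. poly (fac i j) (qint k))" unfolding Lg_def poly_prod ..
    also have "\<dots> = 0" by (rule prod_zero) (use False that in \<open>auto simp: fac_def intro!: bexI[of _ k]\<close>)
    finally show ?thesis using False by simp
  qed
  have agree: "poly p x = poly L x" if xin: "x \<in> qint ` {..d}" for x
  proof -
    obtain k where k: "k \<le> d" "x = qint k" using xin by auto
    have "poly L x = (\<Sum>i\<le>d. poly p (qint i) * (if i = k then 1 else 0))"
      unfolding L_def poly_sum k(2) by (intro sum.cong refl) (simp add: polyLg k(1))
    also have "\<dots> = poly p (qint k)" using k(1) by (simp add: if_distrib sum.delta cong: if_cong)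
    finally show ?thesis using k by simp
  qed
  have card: "card (qint ` {..d}) = Suc d" using card_image[OF inj_on_subset[OF qint_inj]] by simp
  have "p = L" by (rule poly_eqI_degree[OF agree]) (use card deg degL in auto)
  then show ?thesis using LR by simp
qed

fun H :: "nat list \<Rightarrow> nat \<Rightarrow> ratfun" where
  "H [] n = (if n = 0 then 1 else 0)"
| "H (b # a) n = (\<Sum>j\<le>n. qvar ^ (b * j) * H a (n - j))"

definition SL :: "nat \<Rightarrow> nat \<Rightarrow> nat list set" where
  "SL l k = {m. length m = l \<and> sum_list m = k}"

lemma finite_SL: "finite (SL l k)"
proof -
  have "SL l k \<subseteq> {xs. set xs \<subseteq> {..k} \<and> length xs = l}"
    unfolding SL_def by (auto simp: member_le_sum_list)
  then show ?thesis using finite_lists_length_eq[of "{..k}" l] finite_subset by blast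
qed

definition wt :: "nat list \<Rightarrow> nat list \<Rightarrow> nat" where
  "wt a m = (\<Sum>i<length a. a ! i * m ! i)"

lemma wcons: "wt (b # a) (j # m) = b * j + wt a m"
  unfolding wt_def by (simp only: length_Cons sum.lessThan_Suc_shift) simp

lemma SL_Suc: "SL (Suc l) n = (\<lambda>(j, m). j # m) ` (SIGMA j:{..n}. SL l (n - j))"
proof
  show "SL (Suc l) n \<subseteq> (\<lambda>(j, m). j # m) ` (SIGMA j:{..n}. SL l (n - j))"
  proof
    fix x assume "x \<in> SL (Suc l) n"
    then obtain j m where x: "x = j # m" "length m = l" "j + sum_list m = n"
      unfolding SL_def by (auto simp: length_Suc_conv)
    then show "x \<in> (\<lambda>(j, m). j # m) ` (SIGMA j:{..n}. SL l (n - j))"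
      unfolding SL_def by (auto intro!: image_eqI[of _ _ "(j, m)"])
  qed
  show "(\<lambda>(j, m). j # m) ` (SIGMA j:{..n}. SL l (n - j)) \<subseteq> SL (Suc l) n"
    unfolding SL_def by auto
qed

lemma Esum_SL: "Esum a n = (\<Sum>m\<in>SL (length a) n. qvar ^ wt a m)"
  unfolding Esum_def SL_def wt_def ..

lemma Esum_H: "Esum a n = H a n"
proof (induction a arbitrary: n)
  case Nil
  have "SL 0 n = (if n = 0 then {[]} else {})" unfolding SL_def by auto
  then show ?case unfolding Esum_SL by (simp add: wt_def)
next
  case (Cons b a)
  have inj: "inj_on (\<lambda>(j, m). j # m) (SIGMA j:{..n}. SL (length a) (n - j))"
    by (auto simp: inj_on_def)
  have "Esum (b # a) n = (\<Sum>x\<in>(SIGMA j:{..n}. SL (length a) (n - j)).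
          qvar ^ wt (b#a) (fst x # snd x))"
    unfolding Esum_SL length_Cons SL_Suc by (subst sum.reindex[OF inj]) (simp add: case_prod_beta)
  also have "\<dots> = (\<Sum>x\<in>(SIGMA j:{..n}. SL (length a) (n - j)).
          qvar ^ (b * fst x) * qvar ^ wt a (snd x))"
    by (intro sum.cong refl) (auto simp: wcons power_add)
  also have "\<dots> = (\<Sum>j\<le>n. \<Sum>m\<in>SL (length a) (n - j). qvar ^ (b * j) * qvar ^ wt a m)"
    by (subst sum.Sigma) (auto simp: finite_SL case_prod_beta)
  also have "\<dots> = (\<Sum>j\<le>n. qvar ^ (b * j) * Esum a (n - j))"
    by (simp add: Esum_SL sum_distrib_left)
  finally show ?case using Cons by simp
qed

lemma H_0: "H a 0 = 1" by (induction a) auto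

declare H.simps(2)[simp del]

lemma H_Suc: "H (b # a) (Suc n) = H a (Suc n) + qvar ^ b * H (b # a) n"
proof -
  have "H (b # a) (Suc n) = (\<Sum>j\<le>Suc n. qvar ^ (b * j) * H a (Suc n - j))" by (simp add: H.simps)
  also have "\<dots> = qvar ^ (b * 0) * H a (Suc n - 0) + (\<Sum>j\<le>n. qvar ^ (b * Suc j) * H a (Suc n - Suc j))"
    by (rule sum.atMost_Suc_shift)
  also have "\<dots> = H a (Suc n) + qvar ^ b * H (b # a) n"
    by (simp add: H.simps sum_distrib_left power_add mult.assoc)
  finally show ?thesis .
qed

lemma H_single: "H [b] n = qvar ^ (b * n)"
  by (induction n) (simp_all add: H_Suc power_add H.simps)

lemma H_two: "H (b # c # a) n = (\<Sum>(j, i)\<in>{(j, i). j + i \<le> n}. qvar ^ (b * j) * (qvar ^ (c * i) * H a (n - j - i)))"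
proof -
  have S: "{(j, i). j + i \<le> n} = Sigma {..n} (\<lambda>j. {..n - j})" by auto
  show ?thesis unfolding S
    by (subst sum.Sigma[symmetric]) (auto simp: sum_distrib_left diff_diff_add H.simps)
qed

lemma H_swap: "H (b # c # a) n = H (c # b # a) n"
proof -
  have "(\<Sum>(j, i)\<in>{(j, i). j + i \<le> n}. qvar ^ (b * j) * (qvar ^ (c * i) * H a (n - j - i)))
      = (\<Sum>(j, i)\<in>{(j, i). j + i \<le> n}. qvar ^ (c * j) * (qvar ^ (b * i) * H a (n - j - i)))"
    by (rule sum.reindex_bij_witness[where i=prod.swap and j=prod.swap])
       (auto simp: mult_ac add.commute diff_diff_add)
  then show ?thesis unfolding H_two .
qed

lemma H_ident: "(qvar ^ b - qvar ^ c) * H (b # c # a) n = H (b # a) (Suc n) - H (c # a) (Suc n)"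
proof (cases n)
  case 0
  then show ?thesis by (simp add: H_Suc H_0)
next
  case (Suc m)
  define G where "G = H (b # c # a) m"
  have g1: "H (b # c # a) (Suc m) = H (c # a) (Suc m) + qvar ^ b * G" unfolding G_def by (rule H_Suc)
  have g2: "H (b # c # a) (Suc m) = H (b # a) (Suc m) + qvar ^ c * G"
    unfolding G_def H_swap[of b c a "Suc m"] H_swap[of b c a m] by (rule H_Suc)
  have "(qvar ^ b - qvar ^ c) * H (b # c # a) (Suc m)
      = qvar ^ b * H (b # a) (Suc m) - qvar ^ c * H (c # a) (Suc m)"
    apply (subst left_diff_distrib)
    apply (subst (2) g1)
    apply (subst g2)
    by (simp add: algebra_simps)
  then show ?thesis using Suc by (simp add: H_Suc)
qed

lemma E_exists:
  assumes "distinct a" "a \<noteq> []"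
  shows "\<exists>p. degree p \<le> sum_list a \<and> (\<forall>n. poly p (qint n) = H a n)"
  using assms
proof (induction "length a" arbitrary: a rule: less_induct)
  case less
  show ?case
  proof (cases a)
    case Nil then show ?thesis using less by simp
  next
    case (Cons b a1)
    note ab = Cons
    show ?thesis
    proof (cases a1)
      case Nil
      define p where "p = [:1, qvar - 1:] ^ b"
      have "degree p \<le> degree [:1, qvar - 1:] * b" unfolding p_def by (rule degree_power_le)
      also have "\<dots> \<le> b" by simp
      finally have "degree p \<le> sum_list a" using ab Nil by simp
      moreover have "poly p (qint n) = H a n" for n
      proof -
        have "poly [:1, qvar - 1:] (qint n) = qvar ^ n" using qpow_qint[of n] by (simp add: mult.commute)
        then show ?thesis unfolding p_def ab Nil H_single poly_power
          by (simp add: power_mult[symmetric] mult.commute)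
      qed
      ultimately show ?thesis by blast
    next
      case (Cons c a2)
      have a: "a = b # c # a2" using Cons ab by simp
      have bc: "b \<noteq> c" using less.prems a by simp
      obtain p1 where p1: "degree p1 \<le> sum_list (b # a2)" "\<And>n. poly p1 (qint n) = H (b # a2) n"
        using less.hyps[of "b # a2"] less.prems a by auto
      obtain p2 where p2: "degree p2 \<le> sum_list (c # a2)" "\<And>n. poly p2 (qint n) = H (c # a2) n"
        using less.hyps[of "c # a2"] less.prems a by auto
      have ne: "qvar ^ b - qvar ^ c \<noteq> 0" using qpow_inj bc by auto
      define p where "p = smult (inverse (qvar ^ b - qvar ^ c)) (pcompose (p1 - p2) [:1, qvar:])"
      have "degree p \<le> degree (pcompose (p1 - p2) [:1, qvar:])" unfolding p_def by (rule degree_smult_le)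
      also have "\<dots> = degree (p1 - p2)" using qvar_ne0 by (simp add: degree_pcompose)
      also have "\<dots> \<le> max (degree p1) (degree p2)" by (rule degree_diff_le_max)
      also have "\<dots> \<le> sum_list a" using p1(1) p2(1) a by auto
      finally have "degree p \<le> sum_list a" .
      moreover have "poly p (qint n) = H a n" for n
      proof -
        have "poly p (qint n) = inverse (qvar ^ b - qvar ^ c) * (H (b # a2) (Suc n) - H (c # a2) (Suc n))"
        proof -
          have "poly [:1, qvar:] (qint n) = qint (Suc n)" by (simp add: qint_Suc mult.commute)
          then show ?thesis unfolding p_def by (simp add: poly_pcompose p1(2) p2(2) del: pCons_0_0 poly_pCons)
        qed
        also have "\<dots> = H a n" unfolding a H_ident[symmetric] using ne by simp
        finally show ?thesis .
      qed
      ultimately show ?thesis by blast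
    qed
  qed
qed

lemma poly_eq_inf:
  fixes p q :: "'b::{comm_ring_1,ring_no_zero_divisors} poly"
  assumes "infinite S" "\<And>x. x \<in> S \<Longrightarrow> poly p x = poly q x"
  shows "p = q"
proof (rule ccontr)
  assume "p \<noteq> q"
  then have "finite {x. poly (p - q) x = 0}" by (intro poly_roots_finite) simp
  moreover have "S \<subseteq> {x. poly (p - q) x = 0}" using assms(2) by auto
  ultimately show False using assms(1) finite_subset by blast
qed

lemma Epoly_props:
  assumes "distinct a" "a \<noteq> []"
  shows "degree (Epoly a) \<le> sum_list a" "\<And>n. poly (Epoly a) (qint n) = Esum a n" "PR (Epoly a)"
proof -
  obtain p where p: "degree p \<le> sum_list a" "\<And>n. poly p (qint n) = H a n"
    using E_exists[OF assms] by blast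
  have "Epoly a = p" unfolding Epoly_def
  proof (rule the_equality)
    show "\<forall>n. poly p (qint n) = Esum a n" using p(2) by (simp add: Esum_H)
    fix p' assume h: "\<forall>n. poly p' (qint n) = Esum a n"
    show "p' = p"
    proof (rule poly_eq_inf[of "range qint"])
      show "infinite (range qint)" using qint_inj by (rule range_inj_infinite)
      fix x assume "x \<in> range qint"
      then obtain n where "x = qint n" by blast
      then show "poly p' x = poly p x" using h p(2) by (simp add: Esum_H)
    qed
  qed
  then show d: "degree (Epoly a) \<le> sum_list a" and v: "\<And>n. poly (Epoly a) (qint n) = Esum a n"
    using p by (simp_all add: Esum_H)
  have "Esum a n \<in> RR" for n unfolding Esum_def
    by (rule RR_sum[THEN conjunct1]) (rule qpow_RR(1))
  then show "PR (Epoly a)" by (intro interp_PR[OF d]) (simp add: v)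
qed

lemma ev_Esum: "ev (Esum a n) = of_nat ((n + length a - 1) choose n)"
proof -
  have "ev (Esum a n) = (\<Sum>m\<in>SL (length a) n. 1)"
    unfolding Esum_SL using RR_sum[of "SL (length a) n" "\<lambda>m. qvar ^ wt a m"] qpow_RR
    by simp
  also have "\<dots> = of_nat (card (SL (length a) n))" by simp
  also have "card (SL (length a) n) = (n + length a - 1) choose n"
    unfolding SL_def by (rule card_length_sum_list)
  finally show ?thesis .
qed

fun expand :: "'a list \<Rightarrow> nat list \<Rightarrow> 'a list" where
  "expand (c # cs) (m # ms) = replicate (Suc m) c @ expand cs ms"
| "expand _ _ = []"

lemma expand_length: "length m = length cs \<Longrightarrow> length (expand cs m) = sum_list m + length cs"
  by (induction cs arbitrary: m) (auto simp: length_Suc_conv)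

lemma expand_set: "length m = length cs \<Longrightarrow> set (expand cs m) = set cs"
  by (induction cs arbitrary: m) (auto simp: length_Suc_conv)

lemma sorted_replicate_le: "sorted_wrt (\<le>) (replicate n (x::'a::order))"
  by (induction n) auto

lemma expand_sorted:
  fixes cs :: "'a::order list"
  shows "sorted_wrt (<) cs \<Longrightarrow> length m = length cs \<Longrightarrow> sorted_wrt (\<le>) (expand cs m)"
proof (induction cs arbitrary: m)
  case Nil then show ?case by simp
next
  case (Cons c cs)
  then obtain m0 ms where m: "m = m0 # ms" "length ms = length cs" by (auto simp: length_Suc_conv)
  have "sorted_wrt (\<le>) (expand cs ms)" using Cons m by simp
  moreover have "\<forall>y\<in>set (expand cs ms). c \<le> y" using Cons.prems m by (simp add: expand_set less_imp_le)
  ultimately show ?case using m by (auto simp: sorted_wrt_append sorted_replicate_le)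
qed

lemma expand_inj:
  fixes cs :: "'a::order list"
  shows "sorted_wrt (<) cs \<Longrightarrow> sorted_wrt (<) cs' \<Longrightarrow> length m = length cs \<Longrightarrow> length m' = length cs'
    \<Longrightarrow> expand cs m = expand cs' m' \<Longrightarrow> cs = cs' \<and> m = m'"
proof (induction cs arbitrary: cs' m m')
  case Nil
  then show ?case by (cases cs'; cases m') auto
next
  case (Cons c cs)
  obtain m0 ms where m: "m = m0 # ms" "length ms = length cs" using Cons.prems by (auto simp: length_Suc_conv)
  show ?case
  proof (cases cs')
    case Nil then show ?thesis using Cons.prems m by simp
  next
    case (Cons c' cs2)
    note cs'eq = this
    obtain m0' ms' where m': "m' = m0' # ms'" "length ms' = length cs2" using Cons.prems cs'eq by (auto simp: length_Suc_conv)
    have eq: "replicate (Suc m0) c @ expand cs ms = replicate (Suc m0') c' @ expand cs2 ms'"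
      using Cons.prems(5) unfolding cs'eq m m' expand.simps .
    then have cc: "c = c'" by simp
    have n1: "c \<notin> set (expand cs ms)" using Cons.prems(1) m by (auto simp: expand_set)
    have n2: "c \<notin> set (expand cs2 ms')" using Cons.prems(2) cs'eq m' cc by (auto simp: expand_set)
    have f1: "filter (\<lambda>x. x = c) (expand cs ms) = []" using n1 by (auto simp: filter_empty_conv)
    have f2: "filter (\<lambda>x. x = c) (expand cs2 ms') = []" using n2 by (auto simp: filter_empty_conv)
    have "filter (\<lambda>x. x = c) (replicate (Suc m0) c @ expand cs ms) = filter (\<lambda>x. x = c) (replicate (Suc m0') c' @ expand cs2 ms')"
      by (simp only: eq)
    then have "replicate (Suc m0) c = replicate (Suc m0') c" using f1 f2 cc by simp
    then have mm: "m0 = m0'" by (metis length_replicate nat.inject)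
    then have "expand cs ms = expand cs2 ms'" using eq cc by simp
    then have "cs = cs2 \<and> ms = ms'"
      using Cons.IH[of cs2 ms ms'] Cons.prems cs'eq m m' by simp
    then show ?thesis using cs'eq m m' cc mm by simp
  qed
qed

lemma expand_surj:
  fixes es :: "'a::order list"
  shows "sorted_wrt (\<le>) es \<Longrightarrow> es \<noteq> [] \<Longrightarrow>
    \<exists>cs m. sorted_wrt (<) cs \<and> cs \<noteq> [] \<and> length m = length cs \<and> expand cs m = es"
proof (induction es)
  case Nil then show ?case by simp
next
  case (Cons x es')
  show ?case
  proof (cases "es' = []")
    case True
    then show ?thesis by (intro exI[of _ "[x]"] exI[of _ "[0]"]) simp
  next
    case False
    then obtain cs' m' where h: "sorted_wrt (<) cs'" "cs' \<noteq> []" "length m' = length cs'" "expand cs' m' = es'"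
      using Cons by auto
    then obtain c cs2 m0 ms where cs': "cs' = c # cs2" "m' = m0 # ms" by (cases cs'; cases m') auto
    have es': "es' = replicate (Suc m0) c @ expand cs2 ms" using h cs' by simp
    have xc: "x \<le> c" using Cons.prems(1) es' by simp
    show ?thesis
    proof (cases "x = c")
      case True
      show ?thesis
        by (intro exI[of _ cs'] exI[of _ "Suc m0 # ms"]) (use h cs' es' True in simp)
    next
      case False
      then have "x < c" using xc by simp
      then have "\<forall>y\<in>set cs'. x < y" using h(1) cs' by (auto intro: less_trans)
      then show ?thesis
        by (intro exI[of _ "x # cs'"] exI[of _ "0 # m'"]) (use h in simp)
    qed
  qed
qed

lemma sc_distinct: "sorted_wrt (<) (xs :: 'a::order list) \<Longrightarrow> distinct xs"
proof (induction xs)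
  case Nil then show ?case by simp
next
  case (Cons x xs)
  then have "x \<notin> set xs" by (metis less_irrefl sorted_wrt.simps(2))
  then show ?case using Cons by simp
qed

lemma sc_finite:
  assumes "finite P"
  shows "finite (strict_chains P)" "cs \<in> strict_chains P \<Longrightarrow> length cs \<le> card P"
proof -
  have "strict_chains P \<subseteq> {xs. set xs \<subseteq> P \<and> length xs \<le> card P}"
  proof
    fix xs assume "xs \<in> strict_chains P"
    then have "distinct xs" "set xs \<subseteq> P" unfolding strict_chains_def using sc_distinct by auto
    then have "length xs = card (set xs)" by (simp add: distinct_card)
    also have "\<dots> \<le> card P" using card_mono[OF assms \<open>set xs \<subseteq> P\<close>] .
    finally show "xs \<in> {xs. set xs \<subseteq> P \<and> length xs \<le> card P}" using \<open>set xs \<subseteq> P\<close> by simp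
  qed
  then show "finite (strict_chains P)" using finite_lists_length_le[OF assms] finite_subset by blast
  show "cs \<in> strict_chains P \<Longrightarrow> length cs \<le> card P" using \<open>strict_chains P \<subseteq> _\<close> by auto
qed

lemma card_comp:
  assumes "1 \<le> k" "1 \<le> L"
  shows "card {m. length m = k \<and> sum_list m + k = L} = (L - 1) choose (k - 1)"
proof (cases "k \<le> L")
  case True
  have "{m. length m = k \<and> sum_list m + k = L} = SL k (L - k)" unfolding SL_def using True by auto
  then have "card {m. length m = k \<and> sum_list m + k = L} = (L - k + k - 1) choose (L - k)"
    unfolding SL_def using card_length_sum_list by simp
  also have "\<dots> = (L - 1) choose (k - 1)"
  proof -
    have e1: "L - k + k - 1 = L - 1" using True by simp
    have e2: "L - 1 - (k - 1) = L - k" using True assms by simp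
    have "(L - 1) choose (k - 1) = (L - 1) choose (L - 1 - (k - 1))"
      by (rule binomial_symmetric) (use True in simp)
    then show ?thesis using e1 e2 by simp
  qed
  finally show ?thesis .
next
  case False
  then have "{m. length m = k \<and> sum_list m + k = L} = {}" by auto
  then show ?thesis using False assms by simp
qed

lemma card_multichains:
  fixes P :: "'a::order set"
  assumes "finite P" "1 \<le> L"
  shows "card (multichains P L) = (\<Sum>cs\<in>strict_chains P. (L - 1) choose (length cs - 1))"
proof -
  define D where "D = Sigma (strict_chains P) (\<lambda>cs. {m. length m = length cs \<and> sum_list m + length cs = L})"
  have bij: "bij_betw (\<lambda>(cs, m). expand cs m) D (multichains P L)"
  proof (rule bij_betw_imageI)
    show "inj_on (\<lambda>(cs, m). expand cs m) D"
    proof (rule inj_onI)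
      fix x y assume xy: "x \<in> D" "y \<in> D" "(\<lambda>(cs, m). expand cs m) x = (\<lambda>(cs, m). expand cs m) y"
      obtain cs m where x: "x = (cs, m)" by (cases x)
      obtain cs' m' where y: "y = (cs', m')" by (cases y)
      have "sorted_wrt (<) cs" "length m = length cs" using xy(1) x unfolding D_def strict_chains_def by auto
      moreover have "sorted_wrt (<) cs'" "length m' = length cs'" using xy(2) y unfolding D_def strict_chains_def by auto
      moreover have "expand cs m = expand cs' m'" using xy(3) x y by simp
      ultimately show "x = y" using expand_inj x y by blast
    qed
    show "(\<lambda>(cs, m). expand cs m) ` D = multichains P L"
    proof
      show "(\<lambda>(cs, m). expand cs m) ` D \<subseteq> multichains P L"
      proof
        fix es assume "es \<in> (\<lambda>(cs, m). expand cs m) ` D"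
        then obtain cs m where h: "(cs, m) \<in> D" "es = expand cs m" by auto
        then have h2: "sorted_wrt (<) cs" "length m = length cs" "set cs \<subseteq> P" "sum_list m + length cs = L"
          unfolding D_def strict_chains_def by auto
        show "es \<in> multichains P L" unfolding multichains_def h(2)
          using h2 expand_length[OF h2(2)] expand_set[OF h2(2)] expand_sorted[OF h2(1,2)] by simp
      qed
      show "multichains P L \<subseteq> (\<lambda>(cs, m). expand cs m) ` D"
      proof
        fix es assume es: "es \<in> multichains P L"
        then have "es \<noteq> []" "sorted_wrt (\<le>) es" using assms(2) unfolding multichains_def by auto
        then obtain cs m where h: "sorted_wrt (<) cs" "cs \<noteq> []" "length m = length cs" "expand cs m = es"
          using expand_surj by blast
        have "(cs, m) \<in> D" unfolding D_def strict_chains_def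
          using h es expand_set[OF h(3)] expand_length[OF h(3)] unfolding multichains_def by auto
        then show "es \<in> (\<lambda>(cs, m). expand cs m) ` D" using h(4) by force
      qed
    qed
  qed
  have fin: "finite {m. length m = length cs \<and> sum_list m + length cs = L}" for cs :: "'a list"
  proof -
    have "{m. length m = length cs \<and> sum_list m + length cs = L} \<subseteq> SL (length cs) (L - length cs)"
      unfolding SL_def by auto
    then show ?thesis using finite_SL finite_subset by blast
  qed
  have "card (multichains P L) = card D" using bij_betw_same_card[OF bij] by simp
  also have "\<dots> = (\<Sum>cs\<in>strict_chains P. card {m. length m = length cs \<and> sum_list m + length cs = L})"
    unfolding D_def using sc_finite(1)[OF assms(1)] fin by (simp add: card_SigmaI)
  also have "\<dots> = (\<Sum>cs\<in>strict_chains P. (L - 1) choose (length cs - 1))"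
  proof (rule sum.cong[OF refl])
    fix cs assume "cs \<in> strict_chains P"
    then have "1 \<le> length cs" unfolding strict_chains_def by (cases cs) auto
    then show "card {m. length m = length cs \<and> sum_list m + length cs = L} = (L - 1) choose (length cs - 1)"
      using card_comp assms(2) by blast
  qed
  finally show ?thesis .
qed

lemma hf_mono:
  fixes P :: "'a::order set"
  assumes fin: "finite P" and hf: "height_function P h"
  shows "x \<in> P \<Longrightarrow> y \<in> P \<Longrightarrow> x < y \<Longrightarrow> h x < h y"
proof (induction "card {z\<in>P. x < z \<and> z < y}" arbitrary: x y rule: less_induct)
  case less
  show ?case
  proof (cases "\<exists>z\<in>P. x < z \<and> z < y")
    case False
    then have "covers P x y" unfolding covers_def using less.prems by auto
    then show ?thesis using hf unfolding height_function_def by blast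
  next
    case True
    then obtain z where z: "z \<in> P" "x < z" "z < y" by blast
    have f: "finite {z\<in>P. x < z \<and> z < y}" using fin by simp
    have s1: "{w\<in>P. x < w \<and> w < z} \<subset> {w\<in>P. x < w \<and> w < y}"
      using z by (auto intro: less_trans)
    have s2: "{w\<in>P. z < w \<and> w < y} \<subset> {w\<in>P. x < w \<and> w < y}"
      using z by (auto intro: less_trans)
    have "h x < h z" using less.hyps[OF psubset_card_mono[OF f s1]] less.prems z by blast
    moreover have "h z < h y" using less.hyps[OF psubset_card_mono[OF f s2]] less.prems z by blast
    ultimately show ?thesis by simp
  qed
qed

lemma chain_h_distinct:
  fixes P :: "'a::order set"
  assumes "finite P" "height_function P h" "cs \<in> strict_chains P"
  shows "distinct (map h cs)" "map h cs \<noteq> []"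
proof -
  have cs: "sorted_wrt (<) cs" "set cs \<subseteq> P" "cs \<noteq> []" using assms(3) unfolding strict_chains_def by auto
  have "sorted_wrt (<) (map h cs)" unfolding sorted_wrt_map
    by (rule sorted_wrt_mono_rel[OF _ cs(1)]) (use hf_mono[OF assms(1,2)] cs(2) in blast)
  then show "distinct (map h cs)" by (rule sc_distinct)
  show "map h cs \<noteq> []" using cs by simp
qed

definition Bp :: "nat \<Rightarrow> rat poly" where
  "Bp j = smult (inverse (fact j)) (\<Prod>i<j. [: - (of_nat i + 2), 1 :])"

lemma poly_Bp: assumes "2 \<le> n" shows "poly (Bp j) (of_nat n) = of_nat ((n - 2) choose j)"
proof -
  have "of_nat ((n - 2) choose j) = (of_nat (n - 2) :: rat) gchoose j" by (rule binomial_gbinomial)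
  also have "\<dots> = (\<Prod>i=0..<j. of_nat (n - 2) - of_nat i) / fact j" by (rule gbinomial_prod_rev)
  also have "\<dots> = (\<Prod>i<j. of_nat n - (of_nat i + 2)) / fact j"
    using assms by (simp add: atLeast0LessThan of_nat_diff algebra_simps)
  also have "(\<Prod>i<j. of_nat n - (of_nat i + 2)) = (\<Prod>i<j. poly [: - (of_nat i + 2), 1 :] (of_nat n :: rat))"
    by (intro prod.cong refl) simp
  also have "\<dots> / fact j = poly (Bp j) (of_nat n)"
    unfolding Bp_def by (simp add: poly_prod divide_inverse mult.commute del: poly_pCons)
  finally show ?thesis by simp
qed

lemma lin_RR: "PR [: - qint k / qvar ^ k, 1 / qvar ^ k :]"
proof -
  have a: "- qint k / qvar ^ k \<in> RR"
    using RR_divide(1)[OF RR_uminus(1)[OF qint_RR(1)] qpow_RR(1)] qpow_RR(2) by simp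
  have b: "1 / qvar ^ k \<in> RR"
    using RR_divide(1)[OF RR_1(1) qpow_RR(1)] qpow_RR(2) by simp
  show ?thesis using a b by (simp add: PR_pCons PR_0)
qed

lemma lin_eval: assumes "k \<le> n"
  shows "poly [: - qint k / qvar ^ k, 1 / qvar ^ k :] (qint n) = qint (n - k)"
proof -
  obtain m where n: "n = k + m" using assms le_Suc_ex by blast
  have "qvar ^ k \<noteq> 0" using qvar_ne0 by simp
  then show ?thesis unfolding n qint_add using qvar_ne0 by (simp add: field_simps)
qed

theorem mainTheorem19:
  fixes P :: "'a::order set" and h :: "'a \<Rightarrow> nat"
  assumes "finite P" and "height_function P h"
  shows "(\<forall>i. no_pole_at_1 (coeff (qZeta P h) i))
       \<and> map_poly eval_at_1 (qZeta P h) = Zeta P"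
proof -
  define T where "T cs = smult (qvar ^ sum_list (map h cs))
        (pcompose (Epoly (map h cs))
           [: - qint (length cs + 1) / qvar ^ (length cs + 1), 1 / qvar ^ (length cs + 1) :])" for cs
  have qZ: "qZeta P h = (\<Sum>cs\<in>strict_chains P. T cs)" unfolding qZeta_def T_def ..
  have PRT: "PR (T cs)" if "cs \<in> strict_chains P" for cs
    unfolding T_def
    by (intro PR_smult qpow_RR(1) PR_pcompose lin_RR Epoly_props(3) chain_h_distinct[OF assms that])
  have PRZ: "PR (qZeta P h)" unfolding qZ by (intro PR_sum PRT)
  define Z where "Z = map_poly ev (qZeta P h)"
  have Zval: "poly Z (of_nat n) = ev (poly (qZeta P h) (qint n))" for n
    using PR_poly[OF PRZ qint_RR(1)] qint_RR(2) unfolding Z_def by simp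
  define V where "V n = (\<Sum>cs\<in>strict_chains P. (of_nat ((n - 2) choose (length cs - 1)) :: rat))" for n
  have Tval: "ev (poly (T cs) (qint n)) = of_nat ((n - 2) choose (length cs - 1))"
    if cs: "cs \<in> strict_chains P" and n: "card P + 2 \<le> n" for cs n
  proof -
    have k: "length cs \<le> card P" "1 \<le> length cs"
      using sc_finite(2)[OF assms(1) cs] cs unfolding strict_chains_def by (auto simp: Suc_le_eq)
    have "poly (T cs) (qint n) = qvar ^ sum_list (map h cs) * Esum (map h cs) (n - (length cs + 1))"
      unfolding T_def using lin_eval[of "length cs + 1" n] k n
      by (simp add: poly_pcompose Epoly_props(2)[OF chain_h_distinct[OF assms cs]])
    then have "ev (poly (T cs) (qint n)) = of_nat ((n - (length cs + 1) + length cs - 1) choose (n - (length cs + 1)))"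
    proof -
      have eR: "Esum (map h cs) N \<in> RR" for N unfolding Esum_def
        by (rule RR_sum[THEN conjunct1]) (rule qpow_RR(1))
      show ?thesis unfolding \<open>poly (T cs) (qint n) = _\<close> RR_mult(2)[OF qpow_RR(1) eR] qpow_RR(2) ev_Esum
        by simp
    qed
    also have "(n - (length cs + 1) + length cs - 1) = n - 2" using k n by simp
    also have "(n - 2) choose (n - (length cs + 1)) = (n - 2) choose (length cs - 1)"
    proof -
      have "(n - 2) choose (length cs - 1) = (n - 2) choose (n - 2 - (length cs - 1))"
        by (rule binomial_symmetric) (use k n in simp)
      moreover have "n - 2 - (length cs - 1) = n - (length cs + 1)" using k n by simp
      ultimately show ?thesis by simp
    qed
    finally show ?thesis .
  qed
  have Zbig: "poly Z (of_nat n) = V n" if n: "card P + 2 \<le> n" for n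
  proof -
    have "poly Z (of_nat n) = ev (\<Sum>cs\<in>strict_chains P. poly (T cs) (qint n))"
      unfolding Zval qZ poly_sum ..
    also have "\<dots> = (\<Sum>cs\<in>strict_chains P. ev (poly (T cs) (qint n)))"
      using RR_sum[of "strict_chains P" "\<lambda>cs. poly (T cs) (qint n)"] PR_poly[OF PRT qint_RR(1)] by simp
    also have "\<dots> = V n" unfolding V_def by (intro sum.cong refl Tval n)
    finally show ?thesis .
  qed
  define W where "W = (\<Sum>cs\<in>strict_chains P. Bp (length cs - 1))"
  have Wval: "poly W (of_nat n) = V n" if "2 \<le> n" for n
    unfolding W_def V_def poly_sum using poly_Bp[OF that] by simp
  have infS: "infinite ((of_nat :: nat \<Rightarrow> rat) ` {N..})" for N
  proof
    assume "finite ((of_nat :: nat \<Rightarrow> rat) ` {N..})"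
    then have "finite {N..}" by (rule finite_imageD) (simp add: inj_on_def)
    then show False using infinite_Ici by blast
  qed
  have ZW: "Z = W"
  proof (rule poly_eq_inf[OF infS[of "card P + 2"]])
    fix x assume "x \<in> (of_nat :: nat \<Rightarrow> rat) ` {card P + 2..}"
    then obtain n where "x = of_nat n" "card P + 2 \<le> n" by auto
    then show "poly Z x = poly W x" using Zbig Wval by simp
  qed
  have Wmc: "poly W (of_nat n) = of_nat (card (multichains P (n - 1)))" if "2 \<le> n" for n
  proof -
    have "card (multichains P (n - 1)) = (\<Sum>cs\<in>strict_chains P. (n - 1 - 1) choose (length cs - 1))"
      by (rule card_multichains[OF assms(1)]) (use that in simp)
    then show ?thesis using Wval[OF that] unfolding V_def by (simp add: diff_diff_add numeral_2_eq_2)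
  qed
  have "Zeta P = W" unfolding Zeta_def
  proof (rule the_equality)
    show "\<forall>n. 2 \<le> n \<longrightarrow> poly W (of_nat n) = of_nat (card (multichains P (n - 1)))" using Wmc by blast
    fix p :: "rat poly" assume hp: "\<forall>n::nat. 2 \<le> n \<longrightarrow> poly p (of_nat n) = of_nat (card (multichains P (n - 1)))"
    show "p = W"
    proof (rule poly_eq_inf[OF infS[of 2]])
      fix x assume "x \<in> (of_nat :: nat \<Rightarrow> rat) ` {2..}"
      then obtain n where "x = of_nat n" "2 \<le> n" by auto
      then show "poly p x = poly W x" using hp Wmc by simp
    qed
  qed
  moreover have "\<forall>i. no_pole_at_1 (coeff (qZeta P h) i)" using PRZ unfolding PR_def RR_def by simp
  ultimately show ?thesis using ZW unfolding Z_def by simp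
qed

end
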